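(* Let $(a_n)_{n\ge1}$ be a real sequence with $|a_n|\le1$, and let $N_1<N_2<\cdots$ be integers with $\lim_{j\to\infty}\frac1{N_j}\sum_{n=1}^{N_j}|a_n|=\theta>0$. Then there exist a subsequence $(N_{j_t})_{t\ge1}$ and a point $x\in X$ such that for all sufficiently large $t$, $$\frac1{N_{j_t}}\sum_{n=1}^{N_{j_t}}f(\hat T^nx)\,a(n)\ \ge\ \theta\,\tau(N_{j_t}).$$ In particular $\limsup_{N\to\infty}\frac{\frac1N\sum_{n=1}^Nf(\hat T^nx)a(n)}{\tau(N)}>0$.
   Context: Let $\tau:\mathbb N\to(0,\infty)$ be non-increasing with $\tau(n)\to0$. Fix integers $2\le q_1<q_2<\cdots$ such that for every $k\ge1$: (i) $q_{k+1}>q_k^4+3q_k$; (ii) $\tau(\lceil q_{k+1}/3\rceil)<\frac1{16q_k}$. For $k\ge1$ put $q^{(0)}_k=q_{2k}$, $q^{(1)}_k=q_{2k+1}$, $q^{(2)}_k=q^{(0)}_k-1$, $q^{(3)}_k=q^{(1)}_k-1$, and $L^{(i)}_k=\lfloor q^{(i)}_{k+1}/(3q^{(i)}_k)\rfloor$. Let $s^{(i)}_k\in\{-1,0,1\}^{\mathbb N}$ (indices $n\ge1$) be given by $s^{(i)}_k(n)=1$ if $n=jq^{(i)}_k$ with $1\le j\le L^{(i)}_k$, $s^{(i)}_k(n)=-1$ if $n=jq^{(i)}_k$ with $L^{(i)}_k<j\le2L^{(i)}_k$, and $s^{(i)}_k(n)=0$ otherwise. For $w\in\{-1,0,1\}^{\mathbb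 N}$ and $p\in\mathbb N_0$ let $\sigma^{-p}w$ be defined by $(\sigma^{-p}w)(n)=0$ for $1\le n\le p$ and $(\sigma^{-p}w)(n)=w(n-p)$ for $n>p$. For $l\le m$ write $w|_l^m=(w_l,\dots,w_m)$. Let $R^{(i)}_k=\{(\sigma^{-p}s^{(i)}_k)|_{q^{(i)}_k}^{q^{(i)}_{k+1}-1}:p=0,1,\dots,q^{(i)}_k\}$ and $P^{(i)}=\{y\in\{-1,0,1\}^{\mathbb N}: y(n)=0\text{ for }1\le n<q^{(i)}_1,\ y|_{q^{(i)}_k}^{q^{(i)}_{k+1}-1}\in R^{(i)}_k\text{ for all }k\ge1\}$. Let $Z=\{-1,0,1\}^{\mathbb N}\times\{-1,0,1\}^{\mathbb Z}$, where each factor carries the metric $d(u,v)=3^{-\min\{|m|:u_m\neq v_m\}}$ and $Z$ the maximum of the two. $\sigma$ is the left shift $(\sigma u)_m=u_{m+1}$ (invertible on $\{-1,0,1\}^{\mathbb Z}$). Define $T:Z\to Z$, $T(y,z)=(\sigma y,\sigma^{y_1}z)$, and $X_i=\overline{\bigcup_{n\ge0}T^n(P^{(i)}\times\{-1,0,1\}^{\mathbb Z})}$ for $i\in\{0,1,2,3\}$. Let $X=X_0\times X_1\times X_2\times X_3\times\{0,1,2,3\}$ with $\hat T(p^{(0)},p^{(1)},p^{(2)},p^{(3)},i)=(Tp^{(0)},Tp^{(1)},Tp^{(2)},Tp^{(3)},i)$, and $f\in\mathcal C(X)$, $f((y^{(0)},z^{(0)}),(y^{(1)},z^{(1)}),(y^{(2)},z^{(2)}),(y^{(3)},z^{(3)}),i)=z^{(i)}_0$.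 *)

theory Defs
  imports "HOL-Analysis.Analysis"
begin

text \<open>One-sided sequences y in {-1,0,1}^N are functions nat => int, indices n >= 1;
  the unused value y 0 is fixed to 0. Two-sided sequences z are functions int => int.
  Closures are taken in the product topology (Function_Topology), which coincides
  with the topology of the metric d on {-1,0,1}^N x {-1,0,1}^Z.\<close>

type_synonym pt = "(nat \<Rightarrow> int) \<times> (int \<Rightarrow> int)"

definition qi :: "(nat \<Rightarrow> nat) \<Rightarrow> nat \<Rightarrow> nat \<Rightarrow> nat" where
  "qi q i k = (if i = 0 then q (2*k) else if i = 1 then q (2*k+1)
               else if i = 2 then q (2*k) - 1 else q (2*k+1) - 1)"

definition Lk :: "(nat \<Rightarrow> nat) \<Rightarrow> nat \<Rightarrow> nat \<Rightarrow> nat" where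
  "Lk q i k = qi q i (k+1) div (3 * qi q i k)"

definition sk :: "(nat \<Rightarrow> nat) \<Rightarrow> nat \<Rightarrow> nat \<Rightarrow> nat \<Rightarrow> int" where
  "sk q i k n =
     (if n \<ge> 1 \<and> (\<exists>j. 1 \<le> j \<and> j \<le> Lk q i k \<and> n = j * qi q i k) then 1
      else if n \<ge> 1 \<and> (\<exists>j. Lk q i k < j \<and> j \<le> 2 * Lk q i k \<and> n = j * qi q i k) then -1
      else 0)"

definition shiftR :: "nat \<Rightarrow> (nat \<Rightarrow> int) \<Rightarrow> nat \<Rightarrow> int" where
  "shiftR p w = (\<lambda>n. if n \<le> p then 0 else w (n - p))"

definition win :: "(nat \<Rightarrow> int) \<Rightarrow> nat \<Rightarrow> nat \<Rightarrow> int list" where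
  "win w l m = map w [l..<Suc m]"

definition Rk :: "(nat \<Rightarrow> nat) \<Rightarrow> nat \<Rightarrow> nat \<Rightarrow> int list set" where
  "Rk q i k = {win (shiftR p (sk q i k)) (qi q i k) (qi q i (k+1) - 1) | p. p \<le> qi q i k}"

definition Pset :: "(nat \<Rightarrow> nat) \<Rightarrow> nat \<Rightarrow> (nat \<Rightarrow> int) set" where
  "Pset q i = {y. y 0 = 0 \<and> (\<forall>n\<ge>1. y n \<in> {-1,0,1}) \<and>
                 (\<forall>n. 1 \<le> n \<and> n < qi q i 1 \<longrightarrow> y n = 0) \<and>
                 (\<forall>k\<ge>1. win y (qi q i k) (qi q i (k+1) - 1) \<in> Rk q i k)}"

definition Zfull :: "(int \<Rightarrow> int) set" where
  "Zfull = {z. \<forall>m. z m \<in> {-1,0,1}}"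

definition shl :: "(nat \<Rightarrow> int) \<Rightarrow> nat \<Rightarrow> int" where
  "shl y = (\<lambda>n. if n = 0 then 0 else y (Suc n))"

definition Tmap :: "pt \<Rightarrow> pt" where
  "Tmap p = (shl (fst p), (\<lambda>m. snd p (m + fst p 1)))"

definition Xi :: "(nat \<Rightarrow> nat) \<Rightarrow> nat \<Rightarrow> pt set" where
  "Xi q i = closure (\<Union>n. (Tmap ^^ n) ` (Pset q i \<times> Zfull))"

type_synonym xpt = "pt \<times> pt \<times> pt \<times> pt \<times> nat"

definition Xhat :: "(nat \<Rightarrow> nat) \<Rightarrow> xpt set" where
  "Xhat q = Xi q 0 \<times> Xi q 1 \<times> Xi q 2 \<times> Xi q 3 \<times> {0,1,2,3}"

definition That :: "xpt \<Rightarrow> xpt" where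
  "That x = (case x of (p0,p1,p2,p3,i) \<Rightarrow> (Tmap p0, Tmap p1, Tmap p2, Tmap p3, i))"

definition fhat :: "xpt \<Rightarrow> real" where
  "fhat x = (case x of (p0,p1,p2,p3,i) \<Rightarrow>
     of_int (snd ([p0,p1,p2,p3] ! i) 0))"

definition avg :: "(nat \<Rightarrow> real) \<Rightarrow> xpt \<Rightarrow> nat \<Rightarrow> real" where
  "avg a x N = (1 / real N) * (\<Sum>n=1..N. fhat ((That ^^ n) x) * a n)"

end

theory Submission
  imports Defs
begin

locale mt =
  fixes \<tau> :: "nat \<Rightarrow> real" and q :: "nat \<Rightarrow> nat"
    and a :: "nat \<Rightarrow> real" and N :: "nat \<Rightarrow> nat" and \<theta> :: real
  assumes tau_pos: "\<And>n. \<tau> n > 0"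
    and tau_noninc: "\<And>m n. m \<le> n \<Longrightarrow> \<tau> n \<le> \<tau> m"
    and q_ge2: "q 1 \<ge> 2"
    and q_mono: "\<And>k. k \<ge> 1 \<Longrightarrow> q k < q (k+1)"
    and q_i: "\<And>k. k \<ge> 1 \<Longrightarrow> q (k+1) > q k ^ 4 + 3 * q k"
    and q_ii: "\<And>k. k \<ge> 1 \<Longrightarrow> \<tau> (nat \<lceil>real (q (k+1)) / 3\<rceil>) < 1 / (16 * real (q k))"
    and a_bd: "\<And>n. n \<ge> 1 \<Longrightarrow> \<bar>a n\<bar> \<le> 1"
    and N_mono: "strict_mono N"
    and N_lim: "(\<lambda>j. (1 / real (N j)) * (\<Sum>n=1..N j. \<bar>a n\<bar>)) \<longlonglongrightarrow> \<theta>"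
    and theta_pos: "\<theta> > 0"
begin

lemma q_lt: "1 \<le> k \<Longrightarrow> k < k' \<Longrightarrow> q k < q k'"
proof (induction k' rule: less_induct)
  case (less k')
  then obtain m where m: "k' = Suc m" by (cases k') auto
  show ?case
  proof (cases "k = m")
    case True thus ?thesis using q_mono[of k] less m by simp
  next
    case False
    hence "q k < q m" using less m by auto
    also have "q m < q k'" using q_mono[of m] less m False by simp
    finally show ?thesis .
  qed
qed

lemma q_le: "1 \<le> k \<Longrightarrow> k \<le> k' \<Longrightarrow> q k \<le> q k'"
  using q_lt[of k k'] by (cases "k = k'") auto

lemma q_ge: "1 \<le> k \<Longrightarrow> q k \<ge> k + 1"
proof (induction k)
  case 0 thus ?case by simp
next
  case (Suc k)
  show ?case
  proof (cases "k = 0")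
    case True thus ?thesis using q_ge2 by simp
  next
    case False thus ?thesis using Suc q_mono[of k] by simp
  qed
qed

lemma q_ge2': "1 \<le> k \<Longrightarrow> q k \<ge> 2"
  using q_le[of 1 k] q_ge2 by simp

lemma q_big: "1 \<le> k \<Longrightarrow> q (k+1) \<ge> 9 * q k"
proof -
  assume k: "1 \<le> k"
  have "q k \<ge> 2" using q_ge2' k by simp
  hence "q k ^ 4 \<ge> 8 * q k"
  proof -
    have "q k ^ 4 = q k * (q k * q k * q k)" by (simp add: power4_eq_xxxx)
    also have "q k * q k * q k \<ge> 2*2*2" using \<open>q k \<ge> 2\<close> by (intro mult_mono) auto
    hence "q k * (q k * q k * q k) \<ge> q k * 8" by simp
    finally show ?thesis by simp
  qed
  thus ?thesis using q_i[OF k] by simp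
qed

lemma q_pow4: "1 \<le> k \<Longrightarrow> q (k+1) > q k ^ 4" using q_i by fastforce

lemma qi_simps:
  "qi q 0 k = q (2*k)" "qi q (Suc 0) k = q (2*k+1)" "qi q 2 k = q (2*k) - 1"
  "qi q 3 k = q (2*k+1) - 1"
  by (auto simp: qi_def)

lemma qi_ge2: "1 \<le> k \<Longrightarrow> i < 4 \<Longrightarrow> qi q i k \<ge> 2"
proof -
  assume k: "1 \<le> k" and i: "i < 4"
  have a: "q (2*k) \<ge> 3" using q_ge[of "2*k"] k by simp
  have b: "q (2*k+1) \<ge> 3" using q_ge[of "2*k+1"] k by simp
  show ?thesis using i a b by (auto simp: qi_def)
qed

lemma qi_big: "1 \<le> k \<Longrightarrow> i < 4 \<Longrightarrow> qi q i (k+1) \<ge> 9 * qi q i k"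
proof -
  assume k: "1 \<le> k" and i: "i < 4"
  have a: "q (2*k+2) \<ge> 9 * q (2*k)"
  proof -
    have "q (2*k+1) \<ge> 9 * q (2*k)" using q_big[of "2*k"] k by simp
    moreover have "q (2*k+2) \<ge> q (2*k+1)" using q_le[of "2*k+1" "2*k+2"] by simp
    ultimately show ?thesis by simp
  qed
  have b: "q (2*k+3) \<ge> 9 * q (2*k+1)"
  proof -
    have "q (2*k+2) \<ge> 9 * q (2*k+1)" using q_big[of "2*k+1"] k by simp
    moreover have "q (2*k+3) \<ge> q (2*k+2)" using q_le[of "2*k+2" "2*k+3"] by simp
    ultimately show ?thesis by simp
  qed
  have c: "q (2*k) \<ge> 1" "q (2*k+1) \<ge> 1" using q_ge[of "2*k"] q_ge[of "2*k+1"] k by auto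
  have e1: "2*(k+1) = 2*k+2" "2*(k+1)+1 = 2*k+3" by auto
  have b2: "9 * q (Suc (2*k)) \<le> q (Suc (Suc (Suc (2*k))))" using b by (simp add: numeral_3_eq_3)
  show ?thesis using i a b2 c unfolding qi_def e1 by auto
qed

lemma qi_lt_succ: "1 \<le> k \<Longrightarrow> i < 4 \<Longrightarrow> qi q i k < qi q i (k+1)"
  using qi_big[of k i] qi_ge2[of k i] by linarith

lemma qi_lt: "1 \<le> k \<Longrightarrow> k < k' \<Longrightarrow> i < 4 \<Longrightarrow> qi q i k < qi q i k'"
proof (induction k' rule: less_induct)
  case (less k')
  then obtain m where m: "k' = Suc m" by (cases k') auto
  show ?case
  proof (cases "k = m")
    case True thus ?thesis using qi_lt_succ[of k i] less m by simp
  next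
    case False
    hence "qi q i k < qi q i m" using less m by auto
    also have "qi q i m < qi q i k'" using qi_lt_succ[of m i] less m False by simp
    finally show ?thesis .
  qed
qed

lemma qi_le: "1 \<le> k \<Longrightarrow> k \<le> k' \<Longrightarrow> i < 4 \<Longrightarrow> qi q i k \<le> qi q i k'"
  using qi_lt[of k k' i] by (cases "k = k'") auto

lemma qi_unbounded: "i < 4 \<Longrightarrow> k \<ge> 1 \<Longrightarrow> qi q i k \<ge> k"
proof (induction k)
  case 0 thus ?case by simp
next
  case (Suc k)
  thus ?case using qi_ge2[of 1 i] qi_lt_succ[of k i] by (cases "k = 0") auto
qed

lemma Lk_ge2: "1 \<le> k \<Longrightarrow> i < 4 \<Longrightarrow> Lk q i k \<ge> 2"
proof -
  assume k: "1 \<le> k" and i: "i < 4"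
  have Q: "qi q i k \<ge> 2" using qi_ge2 k i by simp
  have "qi q i (k+1) \<ge> 9 * qi q i k" using qi_big k i by simp
  hence "qi q i (k+1) \<ge> 2 * (3 * qi q i k)" by simp
  thus ?thesis unfolding Lk_def using Q
    by (metis div_le_mono mult_eq_0_iff nonzero_mult_div_cancel_right not_numeral_le_zero zero_neq_numeral)
qed

end

definition gfun :: "nat \<Rightarrow> nat \<Rightarrow> int" where
  "gfun L d = int (min d L) - int (min d (2*L) - min d L)"

definition skc :: "nat \<Rightarrow> nat \<Rightarrow> nat \<Rightarrow> int" where
  "skc Q L n = (if 1 \<le> n \<and> Q dvd n \<and> n div Q \<le> L then 1
     else if 1 \<le> n \<and> Q dvd n \<and> L < n div Q \<and> n div Q \<le> 2*L then -1 else 0)"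

lemma ex_mult_iff:
  assumes "(Q::nat) > 0"
  shows "(\<exists>j. P j \<and> n = j * Q) \<longleftrightarrow> (Q dvd n \<and> P (n div Q))"
  using assms by (auto simp: dvd_def)

lemma sk_skc:
  assumes "qi q i k > 0"
  shows "sk q i k = skc (qi q i k) (Lk q i k)"
proof
  fix n
  have e1: "(\<exists>j. 1 \<le> j \<and> j \<le> Lk q i k \<and> n = j * qi q i k) \<longleftrightarrow>
     (qi q i k dvd n \<and> 1 \<le> n div qi q i k \<and> n div qi q i k \<le> Lk q i k)"
    using ex_mult_iff[OF assms, of "\<lambda>j. 1 \<le> j \<and> j \<le> Lk q i k" n] by simp
  have e2: "(\<exists>j. Lk q i k < j \<and> j \<le> 2 * Lk q i k \<and> n = j * qi q i k) \<longleftrightarrow>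
     (qi q i k dvd n \<and> Lk q i k < n div qi q i k \<and> n div qi q i k \<le> 2 * Lk q i k)"
    using ex_mult_iff[OF assms, of "\<lambda>j. Lk q i k < j \<and> j \<le> 2 * Lk q i k" n] by simp
  have e3: "1 \<le> n \<Longrightarrow> qi q i k dvd n \<Longrightarrow> 1 \<le> n div qi q i k"
    using assms by (auto elim!: dvdE)
  show "sk q i k n = skc (qi q i k) (Lk q i k) n"
    unfolding sk_def skc_def e1 e2 using e3 by auto
qed

lemma gfun_step:
  "gfun L (Suc d) = gfun L d + (if Suc d \<le> L then 1 else if L < Suc d \<and> Suc d \<le> 2*L then -1 else 0)"
  unfolding gfun_def by auto

lemma gstep:
  assumes "Q > 0"
  shows "gfun L (Suc M div Q) = gfun L (M div Q) + skc Q L (Suc M)"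
proof (cases "Q dvd Suc M")
  case True
  hence "Suc M div Q = Suc (M div Q)" using div_Suc[of M Q] by auto
  thus ?thesis using True unfolding skc_def by (simp add: gfun_step)
next
  case False
  hence "Suc M div Q = M div Q" using div_Suc[of M Q] by (auto simp: dvd_eq_mod_eq_0)
  thus ?thesis using False unfolding skc_def by simp
qed

lemma gshift:
  assumes "Q > 0"
  shows "gfun L ((Suc n - p) div Q) = gfun L ((n - p) div Q) + shiftR p (skc Q L) (Suc n)"
proof (cases "p \<le> n")
  case True
  hence "Suc n - p = Suc (n - p)" by simp
  thus ?thesis using gstep[OF assms, of L "n - p"] True unfolding shiftR_def by simp
next
  case False
  thus ?thesis unfolding shiftR_def by simp
qed

lemma gfun_zero: "2*L \<le> d \<Longrightarrow> gfun L d = 0" unfolding gfun_def by auto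
lemma gfun_id: "d \<le> L \<Longrightarrow> gfun L d = int d" unfolding gfun_def by auto

definition blkP :: "(nat \<Rightarrow> nat) \<Rightarrow> nat \<Rightarrow> nat \<Rightarrow> nat \<Rightarrow> bool" where
  "blkP q i n k \<longleftrightarrow> 1 \<le> k \<and> qi q i k \<le> n \<and> n < qi q i (k+1)"

definition ycon :: "(nat \<Rightarrow> nat) \<Rightarrow> nat \<Rightarrow> (nat \<Rightarrow> nat) \<Rightarrow> nat \<Rightarrow> int" where
  "ycon q i pk n = (if \<exists>k. blkP q i n k then
      shiftR (pk (THE k. blkP q i n k)) (sk q i (THE k. blkP q i n k)) n else 0)"

definition Ssum :: "(nat \<Rightarrow> int) \<Rightarrow> nat \<Rightarrow> int" where
  "Ssum y n = (\<Sum>m=1..n. y m)"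


context mt begin

lemma blk_unique:
  assumes i: "i < 4" and b1: "blkP q i n k" and b2: "blkP q i n k'"
  shows "k = k'"
proof (rule ccontr)
  assume "k \<noteq> k'"
  hence "k < k' \<or> k' < k" by auto
  thus False
  proof
    assume "k < k'"
    hence "qi q i (k+1) \<le> qi q i k'" using qi_le[of "k+1" k' i] i b1 by (auto simp: blkP_def)
    thus False using b1 b2 by (auto simp: blkP_def)
  next
    assume "k' < k"
    hence "qi q i (k'+1) \<le> qi q i k" using qi_le[of "k'+1" k i] i b2 by (auto simp: blkP_def)
    thus False using b1 b2 by (auto simp: blkP_def)
  qed
qed

lemma ycon_blk:
  assumes i: "i < 4" and b: "blkP q i n k"
  shows "ycon q i pk n = shiftR (pk k) (sk q i k) n"
proof -
  have th: "(THE k. blkP q i n k) = k"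
  proof (rule the_equality)
    show "blkP q i n k" by (rule b)
    fix k' assume "blkP q i n k'"
    thus "k' = k" using blk_unique[OF i b] by simp
  qed
  have ex: "\<exists>k. blkP q i n k" using b by blast
  show ?thesis unfolding ycon_def by (simp only: if_P[OF ex] th)
qed

lemma ycon_pre:
  assumes i: "i < 4" and n: "n < qi q i 1"
  shows "ycon q i pk n = 0"
proof -
  have "\<not> blkP q i n k" for k
  proof
    assume b: "blkP q i n k"
    hence "qi q i 1 \<le> qi q i k" using qi_le[of 1 k i] i by (auto simp: blkP_def)
    thus False using b n by (auto simp: blkP_def)
  qed
  thus ?thesis unfolding ycon_def by auto
qed

lemma blk_exists:
  assumes i: "i < 4" and n: "qi q i 1 \<le> n"
  shows "\<exists>k. blkP q i n k"
proof -
  define A where "A = {k. 1 \<le> k \<and> qi q i k \<le> n}"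
  have fin: "finite A"
  proof (rule finite_subset[of _ "{..n}"])
    show "A \<subseteq> {..n}"
    proof
      fix k assume "k \<in> A"
      hence "1 \<le> k" "qi q i k \<le> n" unfolding A_def by auto
      hence "k \<le> n" using qi_unbounded[OF i, of k] by linarith
      thus "k \<in> {..n}" by simp
    qed
  qed auto
  have "1 \<in> A" using n unfolding A_def by auto
  define K where "K = Max A"
  have KA: "K \<in> A" using fin \<open>1 \<in> A\<close> unfolding K_def by (intro Max_in) auto
  have "K + 1 \<notin> A" using Max_ge[OF fin, of "K+1"] unfolding K_def by fastforce
  hence "n < qi q i (K+1)" using KA unfolding A_def by auto
  thus ?thesis using KA unfolding A_def blkP_def by auto
qed

lemma Ssum_struct:
  assumes i: "i < 4" and pk: "\<And>k. 1 \<le> k \<Longrightarrow> pk k \<le> qi q i k"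
  shows "(n < qi q i 1 \<longrightarrow> Ssum (ycon q i pk) n = 0) \<and>
    (\<forall>k. blkP q i n k \<longrightarrow> Ssum (ycon q i pk) n = gfun (Lk q i k) ((n - pk k) div qi q i k))"
proof (induction n)
  case 0
  have "\<not> blkP q i 0 k" for k using qi_ge2[of k i] i by (auto simp: blkP_def)
  thus ?case by (simp add: Ssum_def)
next
  case (Suc n)
  let ?y = "ycon q i pk"
  have SS: "Ssum ?y (Suc n) = Ssum ?y n + ?y (Suc n)" unfolding Ssum_def by simp
  show ?case
  proof (intro conjI allI impI)
    assume "Suc n < qi q i 1"
    thus "Ssum ?y (Suc n) = 0" using SS Suc.IH ycon_pre[OF i, of "Suc n" pk] by simp
  next
    fix k assume b: "blkP q i (Suc n) k"
    let ?Q = "qi q i k" and ?L = "Lk q i k" and ?p = "pk k"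
    have k1: "1 \<le> k" using b by (simp add: blkP_def)
    have Qpos: "?Q > 0" using qi_ge2[OF k1 i] by simp
    have yS: "?y (Suc n) = shiftR ?p (skc ?Q ?L) (Suc n)"
      using ycon_blk[OF i b] sk_skc[OF Qpos] by simp
    have Sn: "Ssum ?y n = gfun ?L ((n - ?p) div ?Q)"
    proof (cases "blkP q i n k")
      case True thus ?thesis using Suc.IH by blast
    next
      case False
      hence eq: "?Q = Suc n" using b by (auto simp: blkP_def)
      hence d0: "(n - ?p) div ?Q = 0" by simp
      have "Ssum ?y n = 0"
      proof (cases "k = 1")
        case True thus ?thesis using Suc.IH eq by simp
      next
        case False
        hence k2: "k - 1 \<ge> 1" using k1 by simp
        have kk: "k - 1 + 1 = k" using k1 by simp
        have lt: "qi q i (k-1) < qi q i k" using qi_lt_succ[OF k2 i] kk by simp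
        have bb: "blkP q i n (k-1)" using lt eq k2 kk unfolding blkP_def by auto
        let ?Q' = "qi q i (k-1)" and ?L' = "Lk q i (k-1)" and ?p' = "pk (k-1)"
        have L2: "?L' \<ge> 2" using Lk_ge2[OF k2 i] .
        have p': "?p' \<le> ?Q'" using pk[OF k2] .
        have "3 * ?Q' * ?L' \<le> ?Q" unfolding Lk_def using kk
          div_times_less_eq_dividend[of "qi q i k" "3 * ?Q'"] by (simp add: mult.commute)
        hence h3: "3 * (?L' * ?Q') \<le> Suc n" using eq by (simp add: algebra_simps)
        have h2: "?L' * ?Q' \<ge> 2 * ?Q'" using L2 by simp
        have h1: "?Q' \<ge> 2" using qi_ge2[OF k2 i] .
        have "2 * (?L' * ?Q') \<le> n - ?p'" using h1 h2 h3 p' by linarith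
        hence "2 * ?L' * ?Q' \<le> n - ?p'" by (simp add: algebra_simps)
        hence "2 * ?L' \<le> (n - ?p') div ?Q'" using qi_ge2[OF k2 i]
          by (simp add: less_eq_div_iff_mult_less_eq)
        hence "gfun ?L' ((n - ?p') div ?Q') = 0" by (rule gfun_zero)
        thus ?thesis using Suc.IH bb by auto
      qed
      thus ?thesis using d0 by (simp add: gfun_def)
    qed
    show "Ssum ?y (Suc n) = gfun ?L ((Suc n - ?p) div ?Q)"
      using SS Sn yS gshift[OF Qpos, of ?L n ?p] by simp
  qed
qed

lemma Ssum_up:
  assumes i: "i < 4" and pk: "\<And>k. 1 \<le> k \<Longrightarrow> pk k \<le> qi q i k"
    and k1: "1 \<le> k" and v: "1 \<le> v" "v \<le> Lk q i k"
    and n: "pk k + v * qi q i k \<le> n" "n < pk k + (v+1) * qi q i k"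
  shows "Ssum (ycon q i pk) n = int v"
proof -
  let ?Q = "qi q i k" and ?L = "Lk q i k" and ?p = "pk k"
  have Q2: "?Q \<ge> 2" using qi_ge2[OF k1 i] .
  have p: "?p \<le> ?Q" using pk[OF k1] .
  have "3 * ?Q * ?L \<le> qi q i (k+1)" unfolding Lk_def
    using div_times_less_eq_dividend[of "qi q i (k+1)" "3 * ?Q"] by (simp add: mult.commute)
  moreover have "n < (?L + 2) * ?Q"
  proof -
    have h: "v * ?Q \<le> ?L * ?Q" using v(2) by (rule mult_le_mono1)
    have n': "n < ?p + v * ?Q + ?Q" using n(2) by (simp add: algebra_simps)
    have "n < ?L * ?Q + 2 * ?Q" using h n' p by linarith
    thus ?thesis by (simp add: algebra_simps)
  qed
  moreover have "(?L + 2) * ?Q \<le> 3 * ?Q * ?L"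
  proof -
    have h: "1 * ?Q \<le> ?L * ?Q" using v by (intro mult_le_mono1) simp
    have e1: "(?L+2)*?Q = ?L*?Q + 2*?Q" by (simp add: algebra_simps)
    have e2: "3*?Q*?L = 3*(?L*?Q)" by simp
    show ?thesis unfolding e1 e2 using h by linarith
  qed
  ultimately have "n < qi q i (k+1)" by linarith
  moreover have "?Q \<le> n"
  proof -
    have "?Q \<le> v * ?Q" using v by simp
    thus ?thesis using n by linarith
  qed
  ultimately have b: "blkP q i n k" using k1 by (simp add: blkP_def)
  have "(n - ?p) div ?Q = v"
  proof (rule div_nat_eqI)
    show "?Q * v \<le> n - ?p" using n by (simp add: algebra_simps)
    show "n - ?p < ?Q * Suc v" using n by (simp add: algebra_simps)
  qed
  thus ?thesis using Ssum_struct[OF i pk] b gfun_id[OF v(2)] by auto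
qed

lemma ycon_Pset:
  assumes i: "i < 4" and pk: "\<And>k. 1 \<le> k \<Longrightarrow> pk k \<le> qi q i k"
  shows "ycon q i pk \<in> Pset q i"
proof -
  let ?y = "ycon q i pk"
  have y0: "?y 0 = 0" using ycon_pre[OF i] qi_ge2[of 1 i] i by simp
  have sk3: "sk q i k m \<in> {-1,0,1}" for k m unfolding sk_def by auto
  have sh: "shiftR p (sk q i k) n \<in> {-1,0,1}" for p k n
    unfolding shiftR_def using sk3[of k "n - p"] by simp
  have vals: "?y n \<in> {-1,0,1}" for n
    unfolding ycon_def using sh by simp
  have pre: "\<forall>n. 1 \<le> n \<and> n < qi q i 1 \<longrightarrow> ?y n = 0" using ycon_pre[OF i] by auto
  have win: "win ?y (qi q i k) (qi q i (k+1) - 1) \<in> Rk q i k" if k: "1 \<le> k" for k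
  proof -
    have "win ?y (qi q i k) (qi q i (k+1) - 1) = win (shiftR (pk k) (sk q i k)) (qi q i k) (qi q i (k+1) - 1)"
      unfolding win_def
    proof (rule map_cong[OF refl])
      fix m assume "m \<in> set [qi q i k..<Suc (qi q i (k + 1) - 1)]"
      hence "blkP q i m k" using k qi_lt_succ[OF k i] by (auto simp: blkP_def)
      thus "?y m = shiftR (pk k) (sk q i k) m" by (rule ycon_blk[OF i])
    qed
    thus ?thesis unfolding Rk_def using pk[OF k] by blast
  qed
  show ?thesis unfolding Pset_def using y0 vals pre win by auto
qed

end

definition Bw :: "(nat \<Rightarrow> real) \<Rightarrow> nat \<Rightarrow> nat \<Rightarrow> real" where
  "Bw a Q s = (\<Sum>n\<in>{s..<s+Q}. a n)"

definition sg :: "real \<Rightarrow> int" where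
  "sg x = (if x > 0 then 1 else if x < 0 then -1 else 0)"

lemma sg_mult: "real_of_int (sg x) * x = \<bar>x\<bar>"
  unfolding sg_def by auto

lemma sg_bd: "\<bar>sg x\<bar> \<le> 1" unfolding sg_def by auto

lemma shift_sum: fixes c Q :: nat shows "(\<Sum>s\<in>{c..<c+Q}. f s) = (\<Sum>r<Q. f (c + r))"
  using sum.shift_bounds_nat_ivl[of f 0 c Q] by (simp add: atLeast0LessThan ac_simps)

lemma blocks_sum:
  fixes f :: "nat \<Rightarrow> 'a::comm_monoid_add" and b k Q :: nat
  shows "(\<Sum>s\<in>{b..<b+k*Q}. f s) = (\<Sum>v<k. (\<Sum>r<Q. f (b + v * Q + r)))"
proof (induction k)
  case 0 show ?case by simp
next
  case (Suc k)
  have "(\<Sum>s\<in>{b..<b+Suc k*Q}. f s) = (\<Sum>s\<in>{b..<b+k*Q}. f s) + (\<Sum>s\<in>{b+k*Q..<b+k*Q+Q}. f s)"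
    using sum.atLeastLessThan_concat[of b "b+k*Q" "b+k*Q+Q" f] by (simp add: algebra_simps)
  also have "(\<Sum>s\<in>{b+k*Q..<b+k*Q+Q}. f s) = (\<Sum>r<Q. f (b + k*Q + r))"
    by (rule shift_sum)
  finally show ?case using Suc by simp
qed

lemma avg_exists:
  fixes g :: "nat \<Rightarrow> real"
  assumes Q: "Q > 0" and T: "T \<le> (\<Sum>p<Q. g p)"
  shows "\<exists>p<Q. T \<le> real Q * g p"
proof (rule ccontr)
  assume "\<not> ?thesis"
  hence lt: "\<And>p. p < Q \<Longrightarrow> real Q * g p < T" by auto
  have "(\<Sum>p<Q. real Q * g p) < (\<Sum>p<Q. T)"
    using Q lt by (intro sum_strict_mono) auto
  hence "real Q * (\<Sum>p<Q. g p) < real Q * T" by (simp add: sum_distrib_left)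
  hence "(\<Sum>p<Q. g p) < T" using Q by simp
  thus False using T by simp
qed

lemma Bw_shift: "Bw a Q s = (\<Sum>r<Q. a (s + r))"
  unfolding Bw_def by (rule shift_sum)

lemma Bw_bd:
  assumes abd: "\<And>n. n \<ge> 1 \<Longrightarrow> \<bar>a n\<bar> \<le> 1" and s: "s \<ge> 1"
  shows "\<bar>Bw a Q s\<bar> \<le> real Q"
proof -
  have "\<bar>Bw a Q s\<bar> \<le> (\<Sum>n\<in>{s..<s+Q}. \<bar>a n\<bar>)" unfolding Bw_def by (rule sum_abs)
  also have "\<dots> \<le> (\<Sum>n\<in>{s..<s+Q}. 1)" using abd s by (intro sum_mono) auto
  finally show ?thesis by simp
qed

lemma a_split:
  assumes R: "R \<ge> 1"
  shows "a s = Bw a R s - Bw a (R-1) (s+1)"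
proof -
  have "Bw a R s = a s + (\<Sum>n\<in>{Suc s..<s+R}. a n)"
    unfolding Bw_def using R by (subst sum.atLeast_Suc_lessThan) auto
  moreover have "s + 1 + (R - 1) = s + R" using R by simp
  ultimately show ?thesis unfolding Bw_def by simp
qed

lemma sum_bd_card:
  fixes g :: "nat \<Rightarrow> real"
  assumes "\<And>m. m \<in> A \<Longrightarrow> \<bar>g m\<bar> \<le> 1"
  shows "\<bar>sum g A\<bar> \<le> real (card A)"
proof -
  have "\<bar>sum g A\<bar> \<le> (\<Sum>m\<in>A. \<bar>g m\<bar>)" by (rule sum_abs)
  also have "\<dots> \<le> (\<Sum>m\<in>A. 1)" using assms by (intro sum_mono) auto
  finally show ?thesis by simp
qed

lemma main_sum:
  fixes a :: "nat \<Rightarrow> real" and z :: "int \<Rightarrow> int" and S :: "nat \<Rightarrow> int"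
  assumes abd: "\<And>n. n \<ge> 1 \<Longrightarrow> \<bar>a n\<bar> \<le> 1" and zbd: "\<And>v. \<bar>z v\<bar> \<le> 1"
    and Q: "Q \<ge> 1" and p: "p < Q" and NQ: "2*Q \<le> N"
    and W: "W = N div Q - 2"
    and Sv: "\<And>v m. 1 \<le> v \<Longrightarrow> v \<le> W \<Longrightarrow> p + v * Q \<le> m \<Longrightarrow> m < p + v * Q + Q \<Longrightarrow> S m = int v"
    and zv: "\<And>v. V0 < v \<Longrightarrow> v \<le> W \<Longrightarrow> z (int v) = sg (Bw a Q (p + v * Q))"
  shows "(\<Sum>v\<in>{V0+1..<W+1}. \<bar>Bw a Q (p + v * Q)\<bar>) - real ((V0+3)*Q)
           \<le> (\<Sum>m=1..N. real_of_int (z (S m)) * a m)"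
proof -
  define g where "g m = real_of_int (z (S m)) * a m" for m
  have gb: "\<bar>g m\<bar> \<le> 1" if "m \<ge> 1" for m
  proof -
    have "\<bar>real_of_int (z (S m))\<bar> \<le> 1" using zbd[of "S m"] by linarith
    hence "\<bar>real_of_int (z (S m))\<bar> * \<bar>a m\<bar> \<le> 1 * 1"
      using abd[OF that] by (intro mult_mono) auto
    thus ?thesis unfolding g_def by (simp add: abs_mult)
  qed
  define d where "d = N div Q"
  have d1: "d * Q \<le> N" unfolding d_def by simp
  have d2: "N < d * Q + Q" unfolding d_def using Q
    by (metis add.commute div_mult_mod_eq mod_less_divisor mult.commute nat_add_left_cancel_less
        not_one_le_zero not_gr_zero)
  have d3: "d \<ge> 2" unfolding d_def using Q NQ by (simp add: less_eq_div_iff_mult_less_eq)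
  have Wd: "W + 2 = d" using W d3 unfolding d_def by simp
  define b where "b = p + (V0+1)*Q"
  define J where "J = {b..<b+(W-V0)*Q}"
  have JN: "J \<subseteq> {1..N}"
  proof
    fix m assume m: "m \<in> J"
    hence "b \<le> m" "m < b + (W-V0)*Q" unfolding J_def by auto
    hence "V0 < W" by (cases "V0 < W") auto
    have "Q \<le> b" unfolding b_def by simp
    hence m1: "1 \<le> m" using Q \<open>b \<le> m\<close> by linarith
    have e1: "b + (W-V0)*Q = p + (W+1)*Q" unfolding b_def using \<open>V0 < W\<close>
      by (simp add: algebra_simps diff_mult_distrib2)
    have "d * Q = (W+2)*Q" using Wd by simp
    hence e2: "(W+1)*Q + Q = d * Q" by (simp add: algebra_simps)
    have "m \<le> N" using e1 e2 p d1 \<open>m < b + (W-V0)*Q\<close> by linarith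
    thus "m \<in> {1..N}" using m1 by simp
  qed
  have sumJ: "(\<Sum>m\<in>J. g m) = (\<Sum>v\<in>{V0+1..<W+1}. \<bar>Bw a Q (p + v * Q)\<bar>)"
  proof -
    have "(\<Sum>m\<in>J. g m) = (\<Sum>v<W-V0. (\<Sum>r<Q. g (b + v * Q + r)))"
      unfolding J_def by (rule blocks_sum)
    also have "\<dots> = (\<Sum>v<W-V0. \<bar>Bw a Q (p + (v + (V0+1))*Q)\<bar>)"
    proof (rule sum.cong[OF refl])
      fix v assume v: "v \<in> {..<W-V0}"
      define u where "u = v + (V0+1)"
      have u1: "1 \<le> u" "u \<le> W" "V0 < u" using v unfolding u_def by auto
      have bu: "b + v * Q = p + u*Q" unfolding b_def u_def by (simp add: algebra_simps)
      have "(\<Sum>r<Q. g (b + v * Q + r)) = (\<Sum>r<Q. real_of_int (sg (Bw a Q (p + u*Q))) * a (p + u*Q + r))"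
      proof (rule sum.cong[OF refl])
        fix r assume r: "r \<in> {..<Q}"
        have "S (b + v * Q + r) = int u" using Sv[OF u1(1) u1(2)] bu r by auto
        thus "g (b + v * Q + r) = real_of_int (sg (Bw a Q (p + u*Q))) * a (p + u*Q + r)"
          unfolding g_def using zv[OF u1(3) u1(2)] bu by simp
      qed
      also have "\<dots> = real_of_int (sg (Bw a Q (p + u*Q))) * Bw a Q (p + u*Q)"
        unfolding Bw_shift by (simp add: sum_distrib_left)
      also have "\<dots> = \<bar>Bw a Q (p + u*Q)\<bar>" by (rule sg_mult)
      finally show "(\<Sum>r<Q. g (b + v * Q + r)) = \<bar>Bw a Q (p + (v + (V0+1))*Q)\<bar>"
        unfolding u_def .
    qed
    also have "\<dots> = (\<Sum>v\<in>{V0+1..<W+1}. \<bar>Bw a Q (p + v * Q)\<bar>)"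
    proof (cases "V0 < W")
      case True
      have "(\<Sum>v\<in>{0 + (V0+1)..<(W-V0) + (V0+1)}. \<bar>Bw a Q (p + v * Q)\<bar>)
          = (\<Sum>v\<in>{0..<W-V0}. \<bar>Bw a Q (p + (v + (V0+1))*Q)\<bar>)"
        by (rule sum.shift_bounds_nat_ivl)
      moreover have "(W-V0) + (V0+1) = W+1" using True by simp
      ultimately show ?thesis by (simp add: atLeast0LessThan)
    next
      case False thus ?thesis by simp
    qed
    finally show ?thesis .
  qed
  have cardJ: "card J = (W-V0)*Q" unfolding J_def by simp
  have cardR: "card ({1..N} - J) \<le> (V0+3)*Q"
  proof -
    have "card ({1..N} - J) = N - (W-V0)*Q" using JN cardJ by (simp add: card_Diff_subset finite_subset)
    moreover have "N < (W+3)*Q"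
    proof -
      have "d * Q + Q = (W+3)*Q" using Wd[symmetric] by (simp add: algebra_simps)
      thus ?thesis using d2 by linarith
    qed
    moreover have "(W+3)*Q \<le> (W-V0)*Q + (V0+3)*Q"
    proof -
      have "W+3 \<le> (W-V0) + (V0+3)" by simp
      hence "(W+3)*Q \<le> ((W-V0) + (V0+3))*Q" by (rule mult_le_mono1)
      thus ?thesis by (simp add: add_mult_distrib)
    qed
    ultimately show ?thesis by linarith
  qed
  have "(\<Sum>m=1..N. g m) = (\<Sum>m\<in>{1..N} - J. g m) + (\<Sum>m\<in>J. g m)"
    using sum.subset_diff[OF JN, of g] by simp
  moreover have "\<bar>\<Sum>m\<in>{1..N} - J. g m\<bar> \<le> real (card ({1..N} - J))"
    using gb by (intro sum_bd_card) auto
  moreover have "real (card ({1..N} - J)) \<le> real ((V0+3)*Q)" using cardR by linarith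
  ultimately show ?thesis unfolding g_def[symmetric] using sumJ by linarith
qed


definition bsel :: "(nat \<Rightarrow> real) \<Rightarrow> nat \<Rightarrow> nat \<Rightarrow> nat" where
  "bsel a R N = (if (\<Sum>s\<in>{R..N-3*R}. \<bar>Bw a (R-1) (s+1)\<bar>) \<le> (\<Sum>s\<in>{R..N-3*R}. \<bar>Bw a R s\<bar>) then 0 else 1)"

definition Tsum :: "(nat \<Rightarrow> real) \<Rightarrow> nat \<Rightarrow> nat \<Rightarrow> real" where
  "Tsum a Q N = (\<Sum>s\<in>{Q..<(N div Q - 2 + 1)*Q}. \<bar>Bw a Q s\<bar>)"

definition psel :: "(nat \<Rightarrow> real) \<Rightarrow> nat \<Rightarrow> nat \<Rightarrow> nat" where
  "psel a Q N = (SOME p. p < Q \<and> Tsum a Q N \<le> real Q * (\<Sum>v\<in>{1..<N div Q - 2 + 1}. \<bar>Bw a Q (p + v * Q)\<bar>))"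

lemma T_avg:
  "Tsum a Q N = (\<Sum>p<Q. \<Sum>v\<in>{1..<N div Q - 2 + 1}. \<bar>Bw a Q (p + v * Q)\<bar>)"
proof -
  define W where "W = N div Q - 2"
  have "Tsum a Q N = (\<Sum>s\<in>{Q..<Q+W*Q}. \<bar>Bw a Q s\<bar>)" unfolding Tsum_def W_def
    by (simp add: algebra_simps)
  also have "\<dots> = (\<Sum>v<W. (\<Sum>r<Q. \<bar>Bw a Q (Q + v * Q + r)\<bar>))" by (rule blocks_sum)
  also have "\<dots> = (\<Sum>r<Q. \<Sum>v<W. \<bar>Bw a Q (Q + v * Q + r)\<bar>)" by (rule sum.swap)
  also have "\<dots> = (\<Sum>r<Q. \<Sum>v\<in>{1..<W+1}. \<bar>Bw a Q (r + v * Q)\<bar>)"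
  proof (rule sum.cong[OF refl])
    fix r
    have "(\<Sum>v\<in>{0+1..<W+1}. \<bar>Bw a Q (r + v * Q)\<bar>) = (\<Sum>v\<in>{0..<W}. \<bar>Bw a Q (r + (v+1) * Q)\<bar>)"
      by (rule sum.shift_bounds_nat_ivl)
    thus "(\<Sum>v<W. \<bar>Bw a Q (Q + v * Q + r)\<bar>) = (\<Sum>v\<in>{1..<W+1}. \<bar>Bw a Q (r + v * Q)\<bar>)"
      by (simp add: atLeast0LessThan algebra_simps)
  qed
  finally show ?thesis unfolding W_def .
qed

lemma psel:
  assumes Q: "Q \<ge> 1"
  shows "psel a Q N < Q \<and> Tsum a Q N \<le> real Q * (\<Sum>v\<in>{1..<N div Q - 2 + 1}. \<bar>Bw a Q (psel a Q N + v * Q)\<bar>)"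
proof -
  have "\<exists>p<Q. Tsum a Q N \<le> real Q * (\<Sum>v\<in>{1..<N div Q - 2 + 1}. \<bar>Bw a Q (p + v * Q)\<bar>)"
    using Q by (intro avg_exists) (auto simp: T_avg)
  hence "\<exists>p. p < Q \<and> Tsum a Q N \<le> real Q * (\<Sum>v\<in>{1..<N div Q - 2 + 1}. \<bar>Bw a Q (p + v * Q)\<bar>)"
    by blast
  thus ?thesis unfolding psel_def by (rule someI_ex)
qed

lemma div_facts:
  fixes N Q :: nat
  assumes "Q \<ge> 1"
  shows "N div Q * Q \<le> N" "N < N div Q * Q + Q"
proof -
  show "N div Q * Q \<le> N" by simp
  have "N = N div Q * Q + N mod Q" by simp
  moreover have "N mod Q < Q" using assms by simp
  ultimately show "N < N div Q * Q + Q" by linarith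
qed

lemma TQ:
  fixes a :: "nat \<Rightarrow> real"
  assumes abd: "\<And>n. n \<ge> 1 \<Longrightarrow> \<bar>a n\<bar> \<le> 1" and R3: "R \<ge> 3" and N4: "4*R \<le> N"
  shows "(\<Sum>s\<in>{R..N-3*R}. \<bar>a s\<bar>) / 2 \<le> Tsum a (R - bsel a R N) N"
proof -
  define hi where "hi = N - 3*R"
  define X0 where "X0 = (\<Sum>s\<in>{R..hi}. \<bar>Bw a R s\<bar>)"
  define X1 where "X1 = (\<Sum>s\<in>{R..hi}. \<bar>Bw a (R-1) (s+1)\<bar>)"
  have sp: "(\<Sum>s\<in>{R..hi}. \<bar>a s\<bar>) \<le> X0 + X1"
  proof -
    have "(\<Sum>s\<in>{R..hi}. \<bar>a s\<bar>) \<le> (\<Sum>s\<in>{R..hi}. \<bar>Bw a R s\<bar> + \<bar>Bw a (R-1) (s+1)\<bar>)"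
    proof (rule sum_mono)
      fix s show "\<bar>a s\<bar> \<le> \<bar>Bw a R s\<bar> + \<bar>Bw a (R-1) (s+1)\<bar>"
        using a_split[of R a s] R3 by simp
    qed
    thus ?thesis unfolding X0_def X1_def by (simp add: sum.distrib)
  qed
  show ?thesis
  proof (cases "X1 \<le> X0")
    case True
    hence b0: "bsel a R N = 0" unfolding bsel_def X0_def X1_def hi_def by simp
    define d where "d = N div R"
    have d1: "d * R \<le> N" "N < d * R + R" using div_facts[of R N] R3 unfolding d_def by auto
    have d4: "d \<ge> 4" unfolding d_def using R3 N4 by (simp add: less_eq_div_iff_mult_less_eq)
    have "hi < (d - 2 + 1) * R"
    proof -
      have "(d - 2 + 1) * R = d * R - R" using d4 by (simp add: algebra_simps diff_mult_distrib)
      moreover have "4 * R \<le> d * R" by (rule mult_le_mono1[OF d4])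
      ultimately show ?thesis unfolding hi_def using d1 R3 by linarith
    qed
    hence sub: "{R..hi} \<subseteq> {R..<(N div R - 2 + 1)*R}" unfolding d_def by auto
    have "X0 \<le> Tsum a R N" unfolding X0_def Tsum_def
      by (rule sum_mono2[OF _ sub]) auto
    thus ?thesis using sp True b0 unfolding hi_def by simp
  next
    case False
    hence b1: "bsel a R N = 1" unfolding bsel_def X0_def X1_def hi_def by auto
    define Q where "Q = R - 1"
    have Q2: "Q \<ge> 2" "R = Q + 1" using R3 unfolding Q_def by auto
    define d where "d = N div Q"
    have d1: "d * Q \<le> N" "N < d * Q + Q" using div_facts[of Q N] Q2 unfolding d_def by auto
    have d4: "d \<ge> 4" unfolding d_def using Q2 N4 by (simp add: less_eq_div_iff_mult_less_eq)
    have X1e: "X1 = (\<Sum>s\<in>{R+1..hi+1}. \<bar>Bw a Q s\<bar>)"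
      unfolding X1_def Q_def by (rule sum.shift_bounds_cl_nat_ivl[symmetric])
    have "hi + 1 < (d - 2 + 1) * Q"
    proof -
      have "(d - 2 + 1) * Q = d * Q - Q" using d4 by (simp add: algebra_simps diff_mult_distrib)
      moreover have "4 * Q \<le> d * Q" by (rule mult_le_mono1[OF d4])
      ultimately show ?thesis unfolding hi_def using d1 Q2 by linarith
    qed
    hence sub: "{R+1..hi+1} \<subseteq> {Q..<(N div Q - 2 + 1)*Q}" unfolding d_def using Q2 by auto
    have "X1 \<le> Tsum a Q N" unfolding X1e Tsum_def
      by (rule sum_mono2[OF _ sub]) auto
    thus ?thesis using sp False b1 unfolding hi_def Q_def by simp
  qed
qed

lemma Asplit:
  fixes a :: "nat \<Rightarrow> real"
  assumes abd: "\<And>n. n \<ge> 1 \<Longrightarrow> \<bar>a n\<bar> \<le> 1" and R1: "R \<ge> 1" and N4: "4*R \<le> N"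
  shows "(\<Sum>n=1..N. \<bar>a n\<bar>) - 4 * real R \<le> (\<Sum>s\<in>{R..N-3*R}. \<bar>a s\<bar>)"
proof -
  have sub: "{R..N-3*R} \<subseteq> {1..N}" using R1 by auto
  have "(\<Sum>n=1..N. \<bar>a n\<bar>) = (\<Sum>n\<in>{1..N} - {R..N-3*R}. \<bar>a n\<bar>) + (\<Sum>s\<in>{R..N-3*R}. \<bar>a s\<bar>)"
    using sum.subset_diff[OF sub, of "\<lambda>n. \<bar>a n\<bar>"] by simp
  moreover have "(\<Sum>n\<in>{1..N} - {R..N-3*R}. \<bar>a n\<bar>) \<le> real (card ({1..N} - {R..N-3*R}))"
    using sum_bd_card[of "{1..N} - {R..N-3*R}" "\<lambda>n. \<bar>a n\<bar>"] abd by auto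
  moreover have "card ({1..N} - {R..N-3*R}) \<le> 4 * R"
  proof -
    have "card ({1..N} - {R..N-3*R}) = N - (N - 3*R + 1 - R)"
      using sub by (simp add: card_Diff_subset)
    thus ?thesis using N4 by simp
  qed
  ultimately show ?thesis by linarith
qed

lemma perN:
  fixes a :: "nat \<Rightarrow> real" and z :: "int \<Rightarrow> int" and S :: "nat \<Rightarrow> int"
  assumes abd: "\<And>n. n \<ge> 1 \<Longrightarrow> \<bar>a n\<bar> \<le> 1" and zbd: "\<And>v. \<bar>z v\<bar> \<le> 1"
    and R3: "R \<ge> 3" and th: "\<theta> > 0"
    and A: "\<theta> * real N / 2 \<le> (\<Sum>n=1..N. \<bar>a n\<bar>)"
    and big: "16 * (2 * real V0 + 5) * (real R)^2 \<le> 3 * \<theta> * real N"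
    and N4: "4*R \<le> N"
    and Qd: "Q = R - bsel a R N" and pd: "p = psel a Q N"
    and Sv: "\<And>v m. 1 \<le> v \<Longrightarrow> v \<le> N div Q - 2 \<Longrightarrow> p + v * Q \<le> m \<Longrightarrow> m < p + v * Q + Q \<Longrightarrow> S m = int v"
    and zv: "\<And>v. V0 < v \<Longrightarrow> v \<le> N div Q - 2 \<Longrightarrow> z (int v) = sg (Bw a Q (p + v * Q))"
  shows "\<theta> * real N / (16 * real R) \<le> (\<Sum>m=1..N. real_of_int (z (S m)) * a m)"
proof -
  define W where "W = N div Q - 2"
  have bs: "bsel a R N \<le> 1" unfolding bsel_def by auto
  have Q1: "Q \<ge> 2" "Q \<le> R" using Qd bs R3 by auto
  have ps: "p < Q" "Tsum a Q N \<le> real Q * (\<Sum>v\<in>{1..<W+1}. \<bar>Bw a Q (p + v * Q)\<bar>)"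
    using psel[of Q a N] Q1 unfolding pd W_def by auto
  have ms: "(\<Sum>v\<in>{V0+1..<W+1}. \<bar>Bw a Q (p + v * Q)\<bar>) - real ((V0+3)*Q)
           \<le> (\<Sum>m=1..N. real_of_int (z (S m)) * a m)"
    using main_sum[of a z Q p N W S V0] abd zbd Q1 ps(1) N4 Sv zv unfolding W_def by auto
  have un: "(\<Sum>v\<in>{1..<W+1}. \<bar>Bw a Q (p + v * Q)\<bar>)
     \<le> (\<Sum>v\<in>{1..<V0+1}. \<bar>Bw a Q (p + v * Q)\<bar>) + (\<Sum>v\<in>{V0+1..<W+1}. \<bar>Bw a Q (p + v * Q)\<bar>)"
  proof -
    have "(\<Sum>v\<in>{1..<W+1}. \<bar>Bw a Q (p + v * Q)\<bar>) \<le> (\<Sum>v\<in>{1..<V0+1} \<union> {V0+1..<W+1}. \<bar>Bw a Q (p + v * Q)\<bar>)"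
      by (rule sum_mono2) auto
    also have "\<dots> = (\<Sum>v\<in>{1..<V0+1}. \<bar>Bw a Q (p + v * Q)\<bar>) + (\<Sum>v\<in>{V0+1..<W+1}. \<bar>Bw a Q (p + v * Q)\<bar>)"
      by (rule sum.union_disjoint) auto
    finally show ?thesis .
  qed
  have lowb: "(\<Sum>v\<in>{1..<V0+1}. \<bar>Bw a Q (p + v * Q)\<bar>) \<le> real V0 * real Q"
  proof -
    have "(\<Sum>v\<in>{1..<V0+1}. \<bar>Bw a Q (p + v * Q)\<bar>) \<le> of_nat (card {1..<V0+1}) * real Q"
    proof (rule sum_bounded_above)
      fix v assume "v \<in> {1..<V0+1}"
      hence "p + v * Q \<ge> 1" using Q1 by (simp add: Suc_le_eq)
      thus "\<bar>Bw a Q (p + v * Q)\<bar> \<le> real Q" using Bw_bd[of a, OF abd] by blast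
    qed
    thus ?thesis by simp
  qed
  define A0 where "A0 = (\<Sum>n=1..N. \<bar>a n\<bar>)"
  have tq: "(A0 - 4 * real R) / 2 \<le> Tsum a Q N"
    using TQ[OF abd R3 N4] Asplit[OF abd _ N4] R3 unfolding A0_def Qd by force
  define Y where "Y = (\<Sum>v\<in>{V0+1..<W+1}. \<bar>Bw a Q (p + v * Q)\<bar>)"
  define X where "X = A0 - 4 * real R"
  have RR: "real R \<ge> 3" using R3 by simp
  have QQ: "real Q \<ge> 2" "real Q \<le> real R" using Q1 by auto
  have X0: "X \<ge> 0"
  proof -
    have "16 * 5 * (real R)^2 \<le> 16 * (2 * real V0 + 5) * (real R)^2"
      by (intro mult_right_mono) auto
    hence "80 * (real R)^2 \<le> 3 * \<theta> * real N" using big by linarith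
    moreover have "real R \<le> (real R)^2" using RR by (simp add: power2_eq_square)
    ultimately have "80 * real R \<le> 3 * \<theta> * real N" by linarith
    thus ?thesis unfolding X_def using A unfolding A0_def by linarith
  qed
  have s1: "X / 2 \<le> real Q * (real V0 * real Q + Y)"
  proof -
    have "X / 2 \<le> real Q * (\<Sum>v\<in>{1..<W+1}. \<bar>Bw a Q (p + v * Q)\<bar>)" using tq ps unfolding X_def by linarith
    also have "\<dots> \<le> real Q * (real V0 * real Q + Y)"
      using un lowb QQ unfolding Y_def by (intro mult_left_mono) auto
    finally show ?thesis .
  qed
  hence s2: "X / (2 * real Q) - real V0 * real Q \<le> Y" using QQ by (simp add: field_simps)
  have s3: "X / (2 * real R) \<le> X / (2 * real Q)" using X0 QQ by (intro divide_left_mono) auto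
  have s4: "real V0 * real Q + real ((V0+3)*Q) \<le> (2 * real V0 + 3) * real R"
  proof -
    have "real V0 * real Q + real ((V0+3)*Q) = (2 * real V0 + 3) * real Q" by (simp add: algebra_simps)
    also have "\<dots> \<le> (2 * real V0 + 3) * real R" using QQ by (intro mult_left_mono) auto
    finally show ?thesis .
  qed
  have main: "X / (2 * real R) - (2 * real V0 + 3) * real R \<le> (\<Sum>m=1..N. real_of_int (z (S m)) * a m)"
    using ms s2 s3 s4 unfolding Y_def by linarith
  have fin: "\<theta> * real N / (16 * real R) \<le> X / (2 * real R) - (2 * real V0 + 3) * real R"
  proof -
    have "16 * (2 * real V0 + 5) * (real R)^2 = 16 * (2 * real V0 + 3) * (real R)^2 + 32 * (real R)^2"
      by (simp add: algebra_simps)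
    moreover have "real R \<le> (real R)^2" using RR by (simp add: power2_eq_square)
    ultimately have "32 * real R + 16 * (2 * real V0 + 3) * (real R)^2 \<le> 3 * \<theta> * real N"
      using big by linarith
    moreover have "4 * \<theta> * real N \<le> 8 * A0" using A unfolding A0_def by linarith
    moreover have "3 * \<theta> * real N = 3 * (\<theta> * real N)" "4 * \<theta> * real N = 4 * (\<theta> * real N)" by simp_all
    moreover have "8 * X = 8 * A0 - 32 * real R" unfolding X_def by simp
    ultimately have key: "\<theta> * real N \<le> 8 * X - 16 * (2 * real V0 + 3) * (real R)^2"
      by (smt (verit))
    have "X / (2 * real R) - (2 * real V0 + 3) * real R - \<theta> * real N / (16 * real R)
       = (8 * X - 16 * (2 * real V0 + 3) * (real R)^2 - \<theta> * real N) / (16 * real R)"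
      using RR by (simp add: field_simps power2_eq_square)
    moreover have "(8 * X - 16 * (2 * real V0 + 3) * (real R)^2 - \<theta> * real N) / (16 * real R) \<ge> 0"
      using key RR by (intro divide_nonneg_pos) auto
    ultimately show ?thesis by linarith
  qed
  show ?thesis using main fin by linarith
qed


lemma Tmap_iter:
  assumes y0: "y 0 = 0"
  shows "(Tmap ^^ m) (y, z) = (\<lambda>l. if l = 0 then 0 else y (l + m), \<lambda>l. z (l + Ssum y m))"
proof (induction m)
  case 0
  show ?case by (simp add: Ssum_def fun_eq_iff y0)
next
  case (Suc m)
  have "Ssum y (Suc m) = Ssum y m + y (Suc m)" unfolding Ssum_def by simp
  thus ?case using Suc by (auto simp: Tmap_def shl_def algebra_simps)
qed

lemma That_iter:
  "(That ^^ m) (p0, p1, p2, p3, i) = ((Tmap ^^ m) p0, (Tmap ^^ m) p1, (Tmap ^^ m) p2, (Tmap ^^ m) p3, i)"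
  by (induction m) (auto simp: That_def)

context mt begin

definition rr :: "nat \<Rightarrow> nat" where "rr n = Max {r. q (r+1) \<le> 3*n}"

lemma rr_props:
  assumes n: "q 3 \<le> 3*n"
  shows "rr n \<ge> 2" "q (rr n + 1) \<le> 3*n" "3*n < q (rr n + 2)"
proof -
  define A where "A = {r. q (r+1) \<le> 3*n}"
  have fin: "finite A"
  proof (rule finite_subset[of _ "{..3*n}"])
    show "A \<subseteq> {..3*n}"
    proof
      fix r assume "r \<in> A"
      hence "q (r+1) \<le> 3*n" unfolding A_def by simp
      moreover have "q (r+1) \<ge> r + 2" using q_ge[of "r+1"] by simp
      ultimately show "r \<in> {..3*n}" by simp
    qed
  qed auto
  have 2: "2 \<in> A" using n unfolding A_def by (simp add: numeral_3_eq_3)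
  have ge: "rr n \<ge> 2" unfolding rr_def A_def[symmetric] using Max_ge[OF fin 2] .
  have inA: "rr n \<in> A" unfolding rr_def A_def[symmetric] using fin 2 by (intro Max_in) auto
  have "rr n + 1 \<notin> A" using Max_ge[OF fin, of "rr n + 1"] unfolding rr_def A_def[symmetric] by fastforce
  thus "rr n \<ge> 2" "q (rr n + 1) \<le> 3*n" "3*n < q (rr n + 2)" using ge inA unfolding A_def by auto
qed

definition Rn :: "nat \<Rightarrow> nat" where "Rn n = q (rr n)"
definition bb :: "nat \<Rightarrow> nat" where "bb n = bsel a (Rn n) n"
definition ii :: "nat \<Rightarrow> nat" where "ii n = rr n mod 2 + 2 * bb n"
definition kk :: "nat \<Rightarrow> nat" where "kk n = rr n div 2"
definition Qn :: "nat \<Rightarrow> nat" where "Qn n = Rn n - bb n"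
definition pn :: "nat \<Rightarrow> nat" where "pn n = psel a (Qn n) n"

lemma bb_le: "bb n \<le> 1" unfolding bb_def bsel_def by auto

lemma ii_lt: "ii n < 4" unfolding ii_def using bb_le[of n] by auto

lemma qi_kk:
  "qi q (ii n) (kk n) = Qn n" "qi q (ii n) (kk n + 1) = q (rr n + 2) - bb n"
proof -
  have b: "bb n = 0 \<or> bb n = 1" using bb_le[of n] by auto
  have r: "rr n mod 2 = 0 \<or> rr n mod 2 = 1" by auto
  have e0: "rr n mod 2 = 0 \<Longrightarrow> 2 * kk n = rr n" unfolding kk_def using div_mult_mod_eq[of "rr n" 2] by linarith
  have e1: "rr n mod 2 = 1 \<Longrightarrow> 2 * kk n + 1 = rr n" unfolding kk_def using div_mult_mod_eq[of "rr n" 2] by linarith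
  have e2: "rr n mod 2 = 0 \<Longrightarrow> 2 * (kk n + 1) = rr n + 2" using e0 by simp
  have e3: "rr n mod 2 = 1 \<Longrightarrow> 2 * (kk n + 1) + 1 = rr n + 2" using e1 by simp
  show "qi q (ii n) (kk n) = Qn n" using b r e0 e1 unfolding ii_def Qn_def Rn_def qi_def by auto
  show "qi q (ii n) (kk n + 1) = q (rr n + 2) - bb n" using b r e2 e3 unfolding ii_def qi_def by auto
qed

lemma pernfacts:
  assumes n: "q 3 \<le> 3*n"
  shows "kk n \<ge> 1" "Rn n \<ge> 3" "real (Rn n) ^ 4 < 3 * real n" "4 * Rn n \<le> n"
    "\<tau> n < 1 / (16 * real (Rn n))" "Qn n \<ge> 2" "pn n < Qn n"
    "n div Qn n \<le> Lk q (ii n) (kk n)"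
proof -
  note r = rr_props[OF n]
  show "kk n \<ge> 1" unfolding kk_def using r(1) by simp
  show R3: "Rn n \<ge> 3" unfolding Rn_def using q_ge[of "rr n"] r(1) by simp
  have "Rn n ^ 4 < q (rr n + 1)" unfolding Rn_def using q_pow4[of "rr n"] r(1) by simp
  hence R4: "Rn n ^ 4 < 3 * n" using r(2) by simp
  hence "real (Rn n ^ 4) < real (3 * n)" by (simp only: of_nat_less_iff)
  thus "real (Rn n) ^ 4 < 3 * real n" by simp
  have "Rn n ^ 4 = Rn n * (Rn n * Rn n * Rn n)" by (simp add: power4_eq_xxxx)
  moreover have "Rn n * Rn n * Rn n \<ge> 3 * 3 * 3" using R3 by (intro mult_le_mono) auto
  note this
  moreover have "Rn n * (Rn n * Rn n * Rn n) \<ge> Rn n * (3 * 3 * 3)"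
    using \<open>Rn n * Rn n * Rn n \<ge> 3 * 3 * 3\<close> by (rule mult_le_mono2)
  ultimately have "Rn n ^ 4 \<ge> Rn n * 27" by simp
  thus "4 * Rn n \<le> n" using R4 by linarith
  have c: "nat \<lceil>real (q (rr n + 1)) / 3\<rceil> \<le> n"
  proof -
    have "real (q (rr n + 1)) \<le> real (3 * n)" using r(2) by (simp only: of_nat_le_iff)
    hence "real (q (rr n + 1)) / 3 \<le> real n" by simp
    hence "\<lceil>real (q (rr n + 1)) / 3\<rceil> \<le> int n" by (intro ceiling_le) simp
    thus ?thesis by (simp add: nat_le_iff)
  qed
  have "\<tau> n \<le> \<tau> (nat \<lceil>real (q (rr n + 1)) / 3\<rceil>)" by (rule tau_noninc[OF c])
  also have "\<dots> < 1 / (16 * real (q (rr n)))" using q_ii[of "rr n"] r(1) by simp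
  finally show "\<tau> n < 1 / (16 * real (Rn n))" unfolding Rn_def .
  show Q2: "Qn n \<ge> 2" unfolding Qn_def using R3 bb_le[of n] by simp
  show "pn n < Qn n" unfolding pn_def using psel[of "Qn n" a n] Q2 by simp
  have "3 * n \<le> qi q (ii n) (kk n + 1)" using qi_kk(2)[of n] r(3) bb_le[of n] by simp
  hence "n \<le> qi q (ii n) (kk n + 1) div 3" by simp
  hence "n div Qn n \<le> (qi q (ii n) (kk n + 1) div 3) div Qn n" by (rule div_le_mono)
  also have "\<dots> = Lk q (ii n) (kk n)" unfolding Lk_def qi_kk(1) by (simp add: div_mult2_eq)
  finally show "n div Qn n \<le> Lk q (ii n) (kk n)" .
qed

lemma big_cond:
  fixes V0 :: nat
  assumes n: "q 3 \<le> 3*n" and nb: "(16 * (2 * real V0 + 5) / \<theta>)^2 \<le> real n"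
  shows "16 * (2 * real V0 + 5) * (real (Rn n))^2 \<le> 3 * \<theta> * real n"
proof -
  define M where "M = 16 * (2 * real V0 + 5) / \<theta>"
  define K where "K = M / 3"
  have Mp: "M > 0" unfolding M_def using theta_pos by simp
  have R4: "real (Rn n) ^ 4 < 3 * real n" using pernfacts(3)[OF n] .
  have eq: "16 * (2 * real V0 + 5) = K * 3 * \<theta>" unfolding K_def M_def using theta_pos by simp
  have "K * (real (Rn n))^2 \<le> real n"
  proof (cases "(real (Rn n))^2 \<le> M")
    case True
    have "K * (real (Rn n))^2 \<le> K * M" using True Mp unfolding K_def by (intro mult_left_mono) auto
    also have "K * M \<le> M * M" unfolding K_def using Mp by simp
    also have "M * M \<le> real n" using nb unfolding M_def by (simp add: power2_eq_square)
    finally show ?thesis .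
  next
    case False
    have "M * (real (Rn n))^2 \<le> (real (Rn n))^2 * (real (Rn n))^2" using False
      by (intro mult_right_mono) auto
    also have "\<dots> = real (Rn n) ^ 4" by (simp add: power2_eq_square power4_eq_xxxx)
    finally have "M * (real (Rn n))^2 < 3 * real n" using R4 by linarith
    thus ?thesis unfolding K_def by simp
  qed
  hence A: "(3 * \<theta>) * (K * (real (Rn n))^2) \<le> (3 * \<theta>) * real n" using theta_pos
    by (intro mult_left_mono) auto
  have B: "16 * (2 * real V0 + 5) * (real (Rn n))^2 = (3 * \<theta>) * (K * (real (Rn n))^2)"
    unfolding eq by (simp add: algebra_simps)
  show ?thesis using B A by (rule ord_eq_le_trans)
qed

end

context mt begin

lemma eventually_good:
  "\<exists>j0. \<forall>j\<ge>j0. q 3 \<le> 3 * N j \<and> \<theta> * real (N j) / 2 \<le> (\<Sum>n=1..N j. \<bar>a n\<bar>)"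
proof -
  have "\<forall>\<^sub>F j in sequentially. \<theta> / 2 < (1 / real (N j)) * (\<Sum>n=1..N j. \<bar>a n\<bar>)"
    using order_tendstoD(1)[OF N_lim, of "\<theta>/2"] theta_pos by simp
  then obtain j1 where j1: "\<And>j. j \<ge> j1 \<Longrightarrow> \<theta> / 2 < (1 / real (N j)) * (\<Sum>n=1..N j. \<bar>a n\<bar>)"
    unfolding eventually_sequentially by blast
  define j0 where "j0 = max j1 (max (q 3) 1)"
  have "q 3 \<le> 3 * N j \<and> \<theta> * real (N j) / 2 \<le> (\<Sum>n=1..N j. \<bar>a n\<bar>)" if j: "j \<ge> j0" for j
  proof
    have Nj: "j \<le> N j" using seq_suble[OF N_mono] .
    show "q 3 \<le> 3 * N j" using Nj j unfolding j0_def by simp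
    have Np: "real (N j) > 0" using Nj j unfolding j0_def by simp
    have "\<theta> / 2 < (1 / real (N j)) * (\<Sum>n=1..N j. \<bar>a n\<bar>)" using j1 j unfolding j0_def by simp
    hence "\<theta> / 2 * real (N j) < (\<Sum>n=1..N j. \<bar>a n\<bar>)" using Np by (simp add: field_simps)
    thus "\<theta> * real (N j) / 2 \<le> (\<Sum>n=1..N j. \<bar>a n\<bar>)" by simp
  qed
  thus ?thesis by blast
qed

lemma ii_mod: "ii n mod 2 = rr n mod 2" unfolding ii_def by simp

theorem main_mt:
  shows "\<exists>js x. strict_mono js \<and> x \<in> Xhat q \<and>
           (\<forall>\<^sub>F t in sequentially. avg a x (N (js t)) \<ge> \<theta> * \<tau> (N (js t))) \<and>
           limsup (\<lambda>M. ereal (avg a x M / \<tau> M)) > 0"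
proof -
  obtain j0 where good: "\<And>j. j \<ge> j0 \<Longrightarrow> q 3 \<le> 3 * N j \<and> \<theta> * real (N j) / 2 \<le> (\<Sum>n=1..N j. \<bar>a n\<bar>)"
    using eventually_good by blast
  have "\<exists>c0<4. infinite {j. j0 \<le> j \<and> ii (N j) = c0}"
  proof (rule ccontr)
    assume "\<not> ?thesis"
    hence fin: "\<And>c. c < 4 \<Longrightarrow> finite {j. j0 \<le> j \<and> ii (N j) = c}" by auto
    have "{j. j0 \<le> j} = (\<Union>c\<in>{..<4}. {j. j0 \<le> j \<and> ii (N j) = c})" using ii_lt by auto
    hence "finite {j. j0 \<le> j}" using fin by auto
    moreover have "infinite {j::nat. j0 \<le> j}" unfolding infinite_nat_iff_unbounded_le
      by (meson max.cobounded1 max.cobounded2 mem_Collect_eq)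
    ultimately show False by simp
  qed
  then obtain c0 where c0: "c0 < 4" and infJ: "infinite {j. j0 \<le> j \<and> ii (N j) = c0}" by blast
  define Jset where "Jset = {j. j0 \<le> j \<and> ii (N j) = c0}"
  have unb: "\<And>m. \<exists>j\<ge>m. j \<in> Jset" using infJ unfolding Jset_def infinite_nat_iff_unbounded_le by blast
  define Fb :: "nat \<Rightarrow> nat" where "Fb V = nat \<lceil>(16 * (2 * real V + 5) / \<theta>)^2\<rceil>" for V
  define nextJ where "nextJ b prev = (LEAST j. j \<in> Jset \<and> prev < j \<and> b \<le> N j)" for b prev
  have nextJ: "nextJ b prev \<in> Jset \<and> prev < nextJ b prev \<and> b \<le> N (nextJ b prev)" for b prev
  proof -
    obtain j where j: "j \<ge> max (Suc prev) b" "j \<in> Jset" using unb by blast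
    have "b \<le> N j" using j seq_suble[OF N_mono, of j] by simp
    hence "j \<in> Jset \<and> prev < j \<and> b \<le> N j" using j by simp
    thus ?thesis unfolding nextJ_def by (rule LeastI)
  qed
  define bnd where "bnd m = max (Fb m) (q (rr m + 2))" for m
  define js where "js = rec_nat (nextJ (Fb 0) 0) (\<lambda>_ prev. nextJ (bnd (N prev)) prev)"
  have js0: "js 0 = nextJ (Fb 0) 0" unfolding js_def by simp
  have jsS: "js (Suc t) = nextJ (bnd (N (js t))) (js t)" for t unfolding js_def by simp
  have jsJ: "js t \<in> Jset" for t using nextJ js0 jsS by (cases t) auto
  have jsmono: "strict_mono js" unfolding strict_mono_Suc_iff using nextJ jsS by simp
  define NN where "NN t = N (js t)" for t
  have NNmono: "strict_mono NN" unfolding NN_def using strict_mono_o[OF N_mono jsmono]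
    by (simp add: o_def)
  define V0 where "V0 t = (case t of 0 \<Rightarrow> 0 | Suc t' \<Rightarrow> NN t')" for t
  have NNbig: "Fb (V0 t) \<le> NN t" for t
  proof (cases t)
    case 0 thus ?thesis using nextJ js0 unfolding V0_def NN_def by simp
  next
    case (Suc t')
    thus ?thesis using nextJ[of "bnd (N (js t'))" "js t'"] jsS unfolding V0_def NN_def bnd_def by simp
  qed
  have goodt: "q 3 \<le> 3 * NN t \<and> \<theta> * real (NN t) / 2 \<le> (\<Sum>n=1..NN t. \<bar>a n\<bar>)" for t
    using good jsJ[of t] unfolding Jset_def NN_def by simp
  have iit: "ii (NN t) = c0" for t using jsJ[of t] unfolding Jset_def NN_def by simp
  have kkmono: "kk (NN t) < kk (NN (Suc t))" for t
  proof -
    let ?o = "rr (NN t)" and ?w = "rr (NN (Suc t))"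
    have "q (?o + 2) \<le> NN (Suc t)"
      using nextJ[of "bnd (N (js t))" "js t"] jsS unfolding NN_def bnd_def by simp
    also have "NN (Suc t) \<le> 3 * NN (Suc t)" by simp
    also have "3 * NN (Suc t) < q (?w + 2)" using rr_props(3) goodt by blast
    finally have lt: "q (?o + 2) < q (?w + 2)" .
    have "?o < ?w"
    proof (rule ccontr)
      assume "\<not> ?o < ?w"
      hence "q (?w + 2) \<le> q (?o + 2)" using q_le[of "?w + 2" "?o + 2"] by simp
      thus False using lt by simp
    qed
    moreover have "?o mod 2 = ?w mod 2" using ii_mod[of "NN t"] ii_mod[of "NN (Suc t)"] iit by simp
    ultimately have "?o + 2 \<le> ?w" by presburger
    hence "(?o + 2) div 2 \<le> ?w div 2" by (rule div_le_mono)
    thus ?thesis unfolding kk_def by simp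
  qed
  have kkinj: "inj (\<lambda>t. kk (NN t))"
  proof -
    have "strict_mono (\<lambda>t. kk (NN t))" unfolding strict_mono_Suc_iff using kkmono by simp
    thus ?thesis by (rule strict_mono_imp_inj_on)
  qed
  define Wt where "Wt t = NN t div Qn (NN t) - 2" for t
  have Wle: "Wt t \<le> NN t" for t unfolding Wt_def using div_le_dividend[of "NN t" "Qn (NN t)"] by linarith
  define tv where "tv v = (LEAST t. v \<le> NN t)" for v
  have tv_eq: "tv v = t" if v: "V0 t < v" "v \<le> Wt t" for v t
    unfolding tv_def
  proof (rule Least_equality)
    show "v \<le> NN t" using v Wle[of t] by simp
    fix t' assume t': "v \<le> NN t'"
    show "t \<le> t'"
    proof (rule ccontr)
      assume "\<not> t \<le> t'"
      then obtain s where s: "t = Suc s" "t' \<le> s" by (cases t) auto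
      have "NN t' \<le> NN s" using s(2) NNmono by (simp add: strict_mono_less_eq)
      thus False using v t' s unfolding V0_def by simp
    qed
  qed
  define z :: "int \<Rightarrow> int" where "z w = (if 1 \<le> w \<and> nat w \<le> Wt (tv (nat w))
      then sg (Bw a (Qn (NN (tv (nat w)))) (pn (NN (tv (nat w))) + nat w * Qn (NN (tv (nat w))))) else 0)" for w
  have zbd: "\<bar>z w\<bar> \<le> 1" for w unfolding z_def using sg_bd by simp
  have zfull: "z \<in> Zfull" unfolding Zfull_def z_def sg_def by auto
  have zv: "z (int v) = sg (Bw a (Qn (NN t)) (pn (NN t) + v * Qn (NN t)))"
    if v: "V0 t < v" "v \<le> Wt t" for v t
  proof -
    have "1 \<le> int v" using v by simp
    moreover have "tv (nat (int v)) = t" using tv_eq[OF v] by simp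
    ultimately show ?thesis using v unfolding z_def by simp
  qed
  define pk where "pk k = (if \<exists>t. kk (NN t) = k then pn (NN (SOME t. kk (NN t) = k)) else 0)" for k
  have pkt: "pk (kk (NN t)) = pn (NN t)" for t
  proof -
    have "\<exists>t'. kk (NN t') = kk (NN t)" by blast
    hence "kk (NN (SOME t'. kk (NN t') = kk (NN t))) = kk (NN t)" by (rule someI_ex)
    hence "(SOME t'. kk (NN t') = kk (NN t)) = t" using kkinj unfolding inj_def by blast
    thus ?thesis unfolding pk_def by auto
  qed
  have Qqi: "qi q c0 (kk (NN t)) = Qn (NN t)" for t using qi_kk(1)[of "NN t"] iit[of t] by simp
  have pkle: "pk k \<le> qi q c0 k" if k: "1 \<le> k" for k
  proof (cases "\<exists>t. kk (NN t) = k")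
    case True
    then obtain t where t: "kk (NN t) = k" by blast
    have "pn (NN t) < Qn (NN t)" using pernfacts(7) goodt by blast
    thus ?thesis using pkt[of t] Qqi[of t] t by simp
  next
    case False thus ?thesis unfolding pk_def by simp
  qed
  define y where "y = ycon q c0 pk"
  have yP: "y \<in> Pset q c0" unfolding y_def using ycon_Pset[OF c0 pkle] by simp
  have y0: "y 0 = 0" using yP unfolding Pset_def by simp
  define comp where "comp j = (if j = c0 then (y, z) else (ycon q j (\<lambda>_. 0), (\<lambda>_. 0::int)))" for j
  define x where "x = (comp 0, comp 1, comp 2, comp 3, c0)"
  have compX: "comp j \<in> Xi q j" if j: "j < 4" for j
  proof -
    have "comp j \<in> Pset q j \<times> Zfull"
    proof (cases "j = c0")
      case True thus ?thesis using yP zfull unfolding comp_def by simp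
    next
      case False
      have "ycon q j (\<lambda>_. 0) \<in> Pset q j" using ycon_Pset[OF j, of "\<lambda>_. 0"] by simp
      moreover have "(\<lambda>_. 0::int) \<in> Zfull" unfolding Zfull_def by simp
      ultimately show ?thesis using False unfolding comp_def by simp
    qed
    hence "comp j \<in> (Tmap ^^ 0) ` (Pset q j \<times> Zfull)" by simp
    hence "comp j \<in> (\<Union>n. (Tmap ^^ n) ` (Pset q j \<times> Zfull))"
      by (rule UN_I[OF UNIV_I])
    thus ?thesis unfolding Xi_def by (rule closure_subset[THEN subsetD])
  qed
  have xX: "x \<in> Xhat q" unfolding x_def Xhat_def using compX c0 by auto
  have fh: "fhat ((That ^^ m) x) = real_of_int (z (Ssum y m))" for m
  proof -
    have cc: "c0 = 0 \<or> c0 = 1 \<or> c0 = 2 \<or> c0 = 3" using c0 by auto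
    have "[(Tmap ^^ m) (comp 0), (Tmap ^^ m) (comp 1), (Tmap ^^ m) (comp 2), (Tmap ^^ m) (comp 3)] ! c0
        = (Tmap ^^ m) (comp c0)" using cc by auto
    moreover have "comp c0 = (y, z)" unfolding comp_def by simp
    ultimately show ?thesis unfolding x_def That_iter fhat_def using Tmap_iter[of y m z, OF y0] by simp
  qed
  have mainineq: "\<theta> * \<tau> (NN t) < avg a x (NN t)" for t
  proof -
    define n where "n = NN t"
    have g: "q 3 \<le> 3 * n" "\<theta> * real n / 2 \<le> (\<Sum>m=1..n. \<bar>a m\<bar>)" using goodt[of t] unfolding n_def by auto
    note pf = pernfacts[OF g(1)]
    have nbig: "(16 * (2 * real (V0 t) + 5) / \<theta>)^2 \<le> real n"
    proof -
      have "(16 * (2 * real (V0 t) + 5) / \<theta>)^2 \<le> real (Fb (V0 t))" unfolding Fb_def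
        by (rule real_nat_ceiling_ge)
      also have "\<dots> \<le> real n" using NNbig[of t] unfolding n_def by simp
      finally show ?thesis .
    qed
    have big: "16 * (2 * real (V0 t) + 5) * (real (Rn n))^2 \<le> 3 * \<theta> * real n"
      using big_cond[OF g(1) nbig] .
    have Sv: "Ssum y m = int v" if v: "1 \<le> v" "v \<le> n div Qn n - 2" "pn n + v * Qn n \<le> m" "m < pn n + v * Qn n + Qn n" for v m
    proof -
      have iin: "ii n = c0" using iit unfolding n_def by simp
      have kn: "kk n = kk (NN t)" unfolding n_def by simp
      have vL: "v \<le> Lk q c0 (kk n)" using v(2) pf(8) iin by simp
      have Q: "qi q c0 (kk n) = Qn n" using Qqi[of t] unfolding n_def by simp
      have P: "pk (kk n) = pn n" using pkt[of t] unfolding n_def by simp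
      show ?thesis unfolding y_def
        using Ssum_up[OF c0 pkle pf(1) v(1) vL] v(3,4) Q P by (simp add: algebra_simps)
    qed
    have zv': "z (int v) = sg (Bw a (Qn n) (pn n + v * Qn n))" if "V0 t < v" "v \<le> n div Qn n - 2" for v
      using zv[of t v] that unfolding Wt_def n_def by simp
    have Qd: "Qn n = Rn n - bsel a (Rn n) n" unfolding Qn_def bb_def by simp
    have pd: "pn n = psel a (Qn n) n" unfolding pn_def by simp
    have ps: "\<theta> * real n / (16 * real (Rn n)) \<le> (\<Sum>m=1..n. real_of_int (z (Ssum y m)) * a m)"
      by (rule perN[of a z "Rn n" \<theta> n "V0 t" "Qn n" "pn n" "Ssum y", OF a_bd zbd pf(2) theta_pos g(2) big pf(4)
        Qd pd Sv zv'])
    have np: "real n > 0" using pf(4) pf(2) by simp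
    have Rp: "real (Rn n) > 0" using pf(2) by simp
    have "avg a x n = (1 / real n) * (\<Sum>m=1..n. real_of_int (z (Ssum y m)) * a m)"
      unfolding avg_def fh ..
    also have "\<dots> \<ge> (1 / real n) * (\<theta> * real n / (16 * real (Rn n)))"
      using ps np by (intro mult_left_mono) auto
    finally have av: "\<theta> / (16 * real (Rn n)) \<le> avg a x n" using np by simp
    have "\<theta> * \<tau> n < \<theta> * (1 / (16 * real (Rn n)))" using pf(5) theta_pos by (rule mult_strict_left_mono)
    thus ?thesis using av unfolding n_def by simp
  qed
  have ev: "\<forall>\<^sub>F t in sequentially. avg a x (N (js t)) \<ge> \<theta> * \<tau> (N (js t))"
    using mainineq unfolding NN_def by (intro always_eventually) (auto intro: less_imp_le)
  have ls: "limsup (\<lambda>M. ereal (avg a x M / \<tau> M)) > 0"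
  proof -
    have "\<forall>\<^sub>F t in sequentially. ereal \<theta> \<le> ((\<lambda>M. ereal (avg a x M / \<tau> M)) \<circ> NN) t"
    proof (intro always_eventually allI)
      fix t
      have "\<theta> \<le> avg a x (NN t) / \<tau> (NN t)"
        using mainineq[of t] tau_pos[of "NN t"] by (simp add: field_simps)
      thus "ereal \<theta> \<le> ((\<lambda>M. ereal (avg a x M / \<tau> M)) \<circ> NN) t" by simp
    qed
    hence "ereal \<theta> \<le> limsup ((\<lambda>M. ereal (avg a x M / \<tau> M)) \<circ> NN)"
      by (intro le_Limsup) auto
    also have "\<dots> \<le> limsup (\<lambda>M. ereal (avg a x M / \<tau> M))" by (rule limsup_subseq_mono[OF NNmono])
    finally show ?thesis using theta_pos by (simp add: order_less_le_trans[of 0 "ereal \<theta>"])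
  qed
  show ?thesis using jsmono xX ev ls by blast
qed

end

theorem mainTheorem10:
  fixes \<tau> :: "nat \<Rightarrow> real" and q :: "nat \<Rightarrow> nat"
    and a :: "nat \<Rightarrow> real" and N :: "nat \<Rightarrow> nat" and \<theta> :: real
  assumes tau_pos: "\<And>n. \<tau> n > 0"
    and tau_noninc: "\<And>m n. m \<le> n \<Longrightarrow> \<tau> n \<le> \<tau> m"
    and tau_lim: "\<tau> \<longlonglongrightarrow> 0"
    and q_ge2: "q 1 \<ge> 2"
    and q_mono: "\<And>k. k \<ge> 1 \<Longrightarrow> q k < q (k+1)"
    and q_i: "\<And>k. k \<ge> 1 \<Longrightarrow> q (k+1) > q k ^ 4 + 3 * q k"
    and q_ii: "\<And>k. k \<ge> 1 \<Longrightarrow> \<tau> (nat \<lceil>real (q (k+1)) / 3\<rceil>) < 1 / (16 * real (q k))"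
    and a_bd: "\<And>n. n \<ge> 1 \<Longrightarrow> \<bar>a n\<bar> \<le> 1"
    and N_mono: "strict_mono N"
    and N_lim: "(\<lambda>j. (1 / real (N j)) * (\<Sum>n=1..N j. \<bar>a n\<bar>)) \<longlonglongrightarrow> \<theta>"
    and theta_pos: "\<theta> > 0"
  shows "\<exists>js x. strict_mono js \<and> x \<in> Xhat q \<and>
           (\<forall>\<^sub>F t in sequentially. avg a x (N (js t)) \<ge> \<theta> * \<tau> (N (js t))) \<and>
           limsup (\<lambda>M. ereal (avg a x M / \<tau> M)) > 0"
  proof -
  interpret mt \<tau> q a N \<theta>
    using tau_pos tau_noninc q_ge2 q_mono q_i q_ii a_bd N_mono N_lim theta_pos
    by unfold_locales blast+
  show ?thesis by (rule main_mt)
qed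

end
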